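(* Let $P$ be a finite poset and $t\geq 2$, $n\geq 2$ integers. Suppose $\mathcal{F}\subseteq[t]^n$ is induced $P$-saturated and there exist $i,i'$ with $1\leq i<i'\leq n$ such that $f(i)=f(i')$ for all $f\in\mathcal{F}$. Then $L_i(\mathcal{F})=\{L_i(f):f\in\mathcal{F}\}$ is an induced $P$-saturated family in $[t]^{n+1}$.
   Context: For positive integers $n,t$, $[n]=\{1,\dots,n\}$ and the hypergrid $[t]^n$ is the set of functions $f:[n]\to[t]$, partially ordered by $f\leq g$ iff $f(i)\leq g(i)$ for all $i\in[n]$. An induced copy of a poset $P$ in a family $\mathcal{F}\subseteq[t]^n$ is an injective map $\phi:P\to\mathcal{F}$ such that $\phi(x)\leq\phi(y)$ iff $x\leq_P y$. A family $\mathcal{F}\subseteq[t]^n$ is induced $P$-free if it contains no induced copy of $P$; it is induced $P$-saturated if it is induced $P$-free and for every $f\in[t]^n\setminus\mathcal{F}$ the family $\mathcal{F}\cup\{f\}$ contains an induced copy of $P$. For $f\in[t]^n$ and $i\in[n]$, $L_i(f)\in[t]^{n+1}$ is defined by $L_i(f)(x)=f(x)$ for $x\in[n]$ and $L_i(f)(n+1)=f(i)$. *)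

theory Defs
  imports Main
begin

text \<open>The hypergrid [t]^n: functions [n] -> [t], represented as functions nat => nat
  that take values in {1..t} on {1..n} and are 0 outside {1..n} (extensional).\<close>
definition hypergrid :: "nat \<Rightarrow> nat \<Rightarrow> (nat \<Rightarrow> nat) set" where
  "hypergrid t n = {f. (\<forall>x\<in>{1..n}. f x \<in> {1..t}) \<and> (\<forall>x. x \<notin> {1..n} \<longrightarrow> f x = 0)}"

definition grid_le :: "nat \<Rightarrow> (nat \<Rightarrow> nat) \<Rightarrow> (nat \<Rightarrow> nat) \<Rightarrow> bool" where
  "grid_le n f g \<longleftrightarrow> (\<forall>x\<in>{1..n}. f x \<le> g x)"

definition finite_poset :: "'a set \<Rightarrow> ('a \<Rightarrow> 'a \<Rightarrow> bool) \<Rightarrow> bool" where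
  "finite_poset P leP \<longleftrightarrow> finite P \<and>
     (\<forall>x\<in>P. leP x x) \<and>
     (\<forall>x\<in>P. \<forall>y\<in>P. leP x y \<and> leP y x \<longrightarrow> x = y) \<and>
     (\<forall>x\<in>P. \<forall>y\<in>P. \<forall>z\<in>P. leP x y \<and> leP y z \<longrightarrow> leP x z)"

definition induced_copy :: "'a set \<Rightarrow> ('a \<Rightarrow> 'a \<Rightarrow> bool) \<Rightarrow> nat \<Rightarrow> (nat \<Rightarrow> nat) set \<Rightarrow> ('a \<Rightarrow> (nat \<Rightarrow> nat)) \<Rightarrow> bool" where
  "induced_copy P leP n F phi \<longleftrightarrow> inj_on phi P \<and> phi ` P \<subseteq> F \<and>
     (\<forall>x\<in>P. \<forall>y\<in>P. grid_le n (phi x) (phi y) \<longleftrightarrow> leP x y)"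

definition induced_free :: "'a set \<Rightarrow> ('a \<Rightarrow> 'a \<Rightarrow> bool) \<Rightarrow> nat \<Rightarrow> (nat \<Rightarrow> nat) set \<Rightarrow> bool" where
  "induced_free P leP n F \<longleftrightarrow> \<not> (\<exists>phi. induced_copy P leP n F phi)"

definition induced_saturated :: "'a set \<Rightarrow> ('a \<Rightarrow> 'a \<Rightarrow> bool) \<Rightarrow> nat \<Rightarrow> nat \<Rightarrow> (nat \<Rightarrow> nat) set \<Rightarrow> bool" where
  "induced_saturated P leP t n F \<longleftrightarrow> F \<subseteq> hypergrid t n \<and> induced_free P leP n F \<and>
     (\<forall>f\<in>hypergrid t n - F. \<not> induced_free P leP n (insert f F))"

definition Lift :: "nat \<Rightarrow> nat \<Rightarrow> (nat \<Rightarrow> nat) \<Rightarrow> (nat \<Rightarrow> nat)" where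
  "Lift n i f = (\<lambda>x. if x \<in> {1..n} then f x else if x = n + 1 then f i else 0)"

end

theory Submission
  imports Defs
begin

lemma transfer_copy:
  assumes "induced_copy P leP n G phi"
    and "inj_on T G" and "T ` G \<subseteq> G'"
    and "\<And>a b. a \<in> G \<Longrightarrow> b \<in> G \<Longrightarrow> grid_le m (T a) (T b) \<longleftrightarrow> grid_le n a b"
  shows "induced_copy P leP m G' (T \<circ> phi)"
  using assms unfolding induced_copy_def
  by (auto simp: inj_on_def image_subset_iff)

lemma Lift_hyp:
  assumes "f \<in> hypergrid t n" "1 \<le> i" "i \<le> n"
  shows "Lift n i f \<in> hypergrid t (n+1)"
  using assms unfolding hypergrid_def Lift_def by auto

lemma Lift_le:
  assumes "1 \<le> i" "i \<le> n"
  shows "grid_le (n+1) (Lift n i f) (Lift n i f') \<longleftrightarrow> grid_le n f f'"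
  using assms unfolding grid_le_def Lift_def
  by (auto simp: le_Suc_eq)

lemma Lift_inj:
  "inj_on (Lift n i) (hypergrid t n)"
proof (rule inj_onI)
  fix f g assume f: "f \<in> hypergrid t n" and g: "g \<in> hypergrid t n" and e: "Lift n i f = Lift n i g"
  show "f = g"
  proof
    fix x
    show "f x = g x"
    proof (cases "x \<in> {1..n}")
      case True then show ?thesis using fun_cong[OF e, of x] by (simp add: Lift_def)
    next
      case False then show ?thesis using f g by (simp add: hypergrid_def)
    qed
  qed
qed

theorem mainTheorem6:
  fixes P :: "'a set" and leP :: "'a \<Rightarrow> 'a \<Rightarrow> bool"
    and t n i i' :: nat and F :: "(nat \<Rightarrow> nat) set"
  assumes "finite_poset P leP"
    and "t \<ge> 2" and "n \<ge> 2"
    and "induced_saturated P leP t n F"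
    and "1 \<le> i" and "i < i'" and "i' \<le> n"
    and "\<forall>f\<in>F. f i = f i'"
  shows "induced_saturated P leP t (n + 1) (Lift n i ` F)"
proof -
  have FH: "F \<subseteq> hypergrid t n" and Ffree: "induced_free P leP n F"
    and Fsat: "\<forall>f\<in>hypergrid t n - F. \<not> induced_free P leP n (insert f F)"
    using assms(4) unfolding induced_saturated_def by auto
  have i1: "1 \<le> i" "i \<le> n" using assms by auto
  define R where "R = (\<lambda>f::nat\<Rightarrow>nat. \<lambda>k. if k \<in> {1..n} then f k else 0)"
  have RL: "R (Lift n i f) = f" if "f \<in> hypergrid t n" for f
    using that unfolding R_def Lift_def hypergrid_def by auto
  have part1: "Lift n i ` F \<subseteq> hypergrid t (n+1)"
    using FH Lift_hyp[OF _ i1] by auto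
  have part2: "induced_free P leP (n+1) (Lift n i ` F)"
    unfolding induced_free_def
  proof
    assume "\<exists>phi. induced_copy P leP (n+1) (Lift n i ` F) phi"
    then obtain phi where c: "induced_copy P leP (n+1) (Lift n i ` F) phi" by blast
    have "induced_copy P leP n F (R \<circ> phi)"
    proof (rule transfer_copy[OF c])
      show "inj_on R (Lift n i ` F)"
      proof (rule inj_onI)
        fix a b assume "a \<in> Lift n i ` F" "b \<in> Lift n i ` F" "R a = R b"
        then show "a = b" using RL FH by (metis (no_types, lifting) imageE subsetD)
      qed
      show "R ` Lift n i ` F \<subseteq> F" using RL FH by force
      fix a b assume "a \<in> Lift n i ` F" "b \<in> Lift n i ` F"
      then obtain fa fb where "fa \<in> F" "fb \<in> F" "a = Lift n i fa" "b = Lift n i fb" by blast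
      moreover have "fa \<in> hypergrid t n" "fb \<in> hypergrid t n" using FH \<open>fa \<in> F\<close> \<open>fb \<in> F\<close> by auto
      ultimately show "grid_le n (R a) (R b) \<longleftrightarrow> grid_le (n+1) a b"
        using RL Lift_le[OF i1] by simp
    qed
    then show False using Ffree unfolding induced_free_def by blast
  qed
  have part3: "\<not> induced_free P leP (n+1) (insert g (Lift n i ` F))"
    if g: "g \<in> hypergrid t (n+1) - Lift n i ` F" for g
  proof -
    define M where "M = max (g i) (max (g i') (g (n+1)))"
    define m where "m = min (g i) (min (g i') (g (n+1)))"
    define h where "h = (\<lambda>k. if k = i then M else if k = i' then m else if k \<in> {1..n} then g k else 0)"
    have gh: "g \<in> hypergrid t (n+1)" "g \<notin> Lift n i ` F" using g by auto
    have gv: "\<And>k. k \<in> {1..n+1} \<Longrightarrow> g k \<in> {1..t}" using gh(1) unfolding hypergrid_def by blast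
    have g3: "g i \<in> {1..t}" "g i' \<in> {1..t}" "g (n+1) \<in> {1..t}"
      using gv assms(5,6,7) by auto
    have hH: "h \<in> hypergrid t n"
      using g3 gv assms(5,6,7)
      unfolding hypergrid_def h_def M_def m_def by (auto simp: max_def min_def)
    have hF: "h \<notin> F"
    proof
      assume "h \<in> F"
      then have "h i = h i'" using assms(8) by blast
      then have "M = m" using assms(6) by (simp add: h_def)
      then have eq: "g i = g i'" "g i' = g (n+1)" unfolding M_def m_def by linarith+
      have "g = Lift n i h"
      proof
        fix x show "g x = Lift n i h x"
          using eq gh(1) assms(5,6,7) unfolding Lift_def h_def M_def m_def hypergrid_def
          by auto
      qed
      then show False using gh(2) \<open>h \<in> F\<close> by blast
    qed
    then obtain phi where c: "induced_copy P leP n (insert h F) phi"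
      using Fsat hH unfolding induced_free_def by blast
    define T where "T = (\<lambda>a. if a = h then g else Lift n i a)"
    have up: "grid_le (n+1) g (Lift n i f) \<longleftrightarrow> grid_le n h f" if "f \<in> F" for f
    proof -
      have fe: "f i = f i'" using that assms(8) by blast
      show ?thesis
      proof
        assume A: "grid_le (n+1) g (Lift n i f)"
        have B: "g k \<le> f k" if k: "k \<in> {1..n}" for k
        proof -
          have "k \<in> {1..n+1}" using k by auto
          then have "g k \<le> Lift n i f k" using A unfolding grid_le_def by blast
          then show ?thesis using k by (simp add: Lift_def)
        qed
        have C: "g (n+1) \<le> f i"
          using A unfolding grid_le_def Lift_def by (drule_tac x="n+1" in bspec) auto
        have E: "g i \<le> f i" "g i' \<le> f i" using B[of i] B[of i'] fe assms(5,6,7) by auto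
        show "grid_le n h f" unfolding grid_le_def
        proof
          fix k assume k: "k \<in> {1..n}"
          consider "k = i" | "k = i'" | "k \<noteq> i" "k \<noteq> i'" by blast
          then show "h k \<le> f k"
          proof cases
            case 1 then show ?thesis using E C by (simp add: h_def M_def)
          next
            case 2 then show ?thesis using E C fe assms(6) by (simp add: h_def m_def)
          next
            case 3 then show ?thesis using B[OF k] k by (simp add: h_def)
          qed
        qed
      next
        assume A: "grid_le n h f"
        have B: "h k \<le> f k" if "k \<in> {1..n}" for k using A that unfolding grid_le_def by blast
        have "M \<le> f i" using B[of i] assms(5,6,7) by (simp add: h_def)
        then have C: "g i \<le> f i" "g i' \<le> f i'" "g (n+1) \<le> f i" using fe unfolding M_def by auto
        have D: "g k \<le> f k" if "k \<in> {1..n}" for k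
        proof (cases "k = i \<or> k = i'")
          case True then show ?thesis using C by auto
        next
          case False then show ?thesis using B[OF that] that by (simp add: h_def)
        qed
        show "grid_le (n+1) g (Lift n i f)" unfolding grid_le_def Lift_def
          using C D by (auto simp: le_Suc_eq)
      qed
    qed
    have dn: "grid_le (n+1) (Lift n i f) g \<longleftrightarrow> grid_le n f h" if "f \<in> F" for f
    proof -
      have fe: "f i = f i'" using that assms(8) by blast
      show ?thesis
      proof
        assume A: "grid_le (n+1) (Lift n i f) g"
        have B: "f k \<le> g k" if k: "k \<in> {1..n}" for k
        proof -
          have "k \<in> {1..n+1}" using k by auto
          then have "Lift n i f k \<le> g k" using A unfolding grid_le_def by blast
          then show ?thesis using k by (simp add: Lift_def)
        qed
        have C: "f i \<le> g (n+1)"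
          using A unfolding grid_le_def Lift_def by (drule_tac x="n+1" in bspec) auto
        have E: "f i \<le> g i" "f i \<le> g i'" using B[of i] B[of i'] fe assms(5,6,7) by auto
        show "grid_le n f h" unfolding grid_le_def
        proof
          fix k assume k: "k \<in> {1..n}"
          consider "k = i" | "k = i'" | "k \<noteq> i" "k \<noteq> i'" by blast
          then show "f k \<le> h k"
          proof cases
            case 1 then show ?thesis using E C by (simp add: h_def M_def)
          next
            case 2 then show ?thesis using E C fe assms(6) by (simp add: h_def m_def)
          next
            case 3 then show ?thesis using B[OF k] k by (simp add: h_def)
          qed
        qed
      next
        assume A: "grid_le n f h"
        have B: "f k \<le> h k" if "k \<in> {1..n}" for k using A that unfolding grid_le_def by blast
        have "f i' \<le> m" using B[of i'] assms(5,6,7) by (simp add: h_def)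
        then have C: "f i \<le> g i" "f i' \<le> g i'" "f i \<le> g (n+1)" using fe unfolding m_def by auto
        have D: "f k \<le> g k" if "k \<in> {1..n}" for k
        proof (cases "k = i \<or> k = i'")
          case True then show ?thesis using C by auto
        next
          case False then show ?thesis using B[OF that] that by (simp add: h_def)
        qed
        show "grid_le (n+1) (Lift n i f) g" unfolding grid_le_def Lift_def
          using C D by (auto simp: le_Suc_eq)
      qed
    qed
    have "induced_copy P leP (n+1) (insert g (Lift n i ` F)) (T \<circ> phi)"
    proof (rule transfer_copy[OF c])
      show "inj_on T (insert h F)"
      proof (rule inj_onI)
        fix a b assume a: "a \<in> insert h F" and b: "b \<in> insert h F" and e: "T a = T b"
        show "a = b"
        proof (cases "a = h")
          case True
          show ?thesis
          proof (rule ccontr)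
            assume "a \<noteq> b"
            then have "b \<in> F" "b \<noteq> h" using True b by auto
            then have "g = Lift n i b" using e True unfolding T_def by simp
            then show False using gh(2) \<open>b \<in> F\<close> by blast
          qed
        next
          case False
          then have aF: "a \<in> F" using a by auto
          show ?thesis
          proof (cases "b = h")
            case True
            then have "g = Lift n i a" using e False unfolding T_def by simp
            then show ?thesis using gh(2) aF by blast
          next
            case bh: False
            then have bF: "b \<in> F" using b by auto
            have "Lift n i a = Lift n i b" using e False bh unfolding T_def by simp
            then show ?thesis using Lift_inj[of n i t] aF bF FH unfolding inj_on_def by blast
          qed
        qed
      qed
      show "T ` insert h F \<subseteq> insert g (Lift n i ` F)" unfolding T_def by auto
      fix a b assume "a \<in> insert h F" "b \<in> insert h F"
      then show "grid_le (n+1) (T a) (T b) \<longleftrightarrow> grid_le n a b"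
      proof (elim insertE)
        assume "a = h" "b = h"
        then show ?thesis unfolding T_def grid_le_def by simp
      next
        assume "a = h" "b \<in> F"
        then show ?thesis using up[of b] hF unfolding T_def by auto
      next
        assume "a \<in> F" "b = h"
        then show ?thesis using dn[of a] hF unfolding T_def by auto
      next
        assume "a \<in> F" "b \<in> F"
        then show ?thesis using Lift_le[OF i1] hF unfolding T_def by auto
      qed
    qed
    then show ?thesis unfolding induced_free_def by blast
  qed
  show ?thesis unfolding induced_saturated_def using part1 part2 part3 by blast
qed

end
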